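(* For every Hilbert space $H$ with $\dim H\ge2$, there exist an infinite semigroup $G$ with unit which is not left-cancellative, a contractive representation $\mathcal S=(S(g))_{g\in G}$ of $G$ on $H$, a representation $\mathcal T=(T(g))_{g\in G}$ of $G$ on $H$, and operators $A,B\in\mathcal L(H)$ such that $$\sum_{g\in G}\|T(g)-AS(g)B\|^2<\infty,$$ but $\mathcal T$ is not similar to a contractive representation of $G$ (i.e. there is no invertible $R\in\mathcal L(H)$ with $\|R^{-1}T(g)R\|\le1$ for all $g\in G$).
   Context: A semigroup $(G,\cdot)$ is left-cancellative if $f\cdot a=f\cdot b$ implies $a=b$ for all $f,a,b\in G$. A representation of a unital semigroup $G$ on $H$ is a map $g\mapsto T(g)\in\mathcal L(H)$ with $T(gh)=T(g)T(h)$ and $T(e)=I$; it is contractive if all $T(g)$ are contractions. *)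

theory Defs
  imports "HOL-Analysis.Analysis"
begin

text \<open>A complex Hilbert space is modelled as a real Hilbert space
  (type class real_inner + complete_space) together with a complex structure J
  (multiplication by the imaginary unit) compatible with the inner product.\<close>

definition complex_structure :: "('a::real_inner \<Rightarrow> 'a) \<Rightarrow> bool" where
  "complex_structure J \<longleftrightarrow> linear J \<and> (\<forall>x. J (J x) = - x) \<and>
     (\<forall>x y. inner (J x) (J y) = inner x y)"

text \<open>Complex dimension at least 2: the space is not the complex span of a single vector.\<close>
definition cdim_ge2 :: "('a::real_inner \<Rightarrow> 'a) \<Rightarrow> bool" where
  "cdim_ge2 J \<longleftrightarrow> \<not> (\<exists>v. \<forall>x. x \<in> span {v, J v})"

text \<open>Bounded complex-linear operators, i.e. elements of L(H).\<close>
definition bop :: "('a::real_inner \<Rightarrow> 'a) \<Rightarrow> ('a \<Rightarrow> 'a) \<Rightarrow> bool" where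
  "bop J T \<longleftrightarrow> bounded_linear T \<and> (\<forall>x. T (J x) = J (T x))"

definition unital_semigroup :: "('g \<Rightarrow> 'g \<Rightarrow> 'g) \<Rightarrow> 'g \<Rightarrow> bool" where
  "unital_semigroup m e \<longleftrightarrow> (\<forall>a b c. m (m a b) c = m a (m b c)) \<and>
     (\<forall>a. m e a = a \<and> m a e = a)"

definition left_cancellative :: "('g \<Rightarrow> 'g \<Rightarrow> 'g) \<Rightarrow> bool" where
  "left_cancellative m \<longleftrightarrow> (\<forall>f a b. m f a = m f b \<longrightarrow> a = b)"

definition representation ::
  "('a::real_inner \<Rightarrow> 'a) \<Rightarrow> ('g \<Rightarrow> 'g \<Rightarrow> 'g) \<Rightarrow> 'g \<Rightarrow> ('g \<Rightarrow> 'a \<Rightarrow> 'a) \<Rightarrow> bool" where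
  "representation J m e T \<longleftrightarrow> (\<forall>g. bop J (T g)) \<and>
     (\<forall>g h. T (m g h) = T g \<circ> T h) \<and> T e = id"

definition contractive :: "('g \<Rightarrow> 'a::real_normed_vector \<Rightarrow> 'a) \<Rightarrow> bool" where
  "contractive T \<longleftrightarrow> (\<forall>g. onorm (T g) \<le> 1)"

definition similar_to_contractive ::
  "('a::real_inner \<Rightarrow> 'a) \<Rightarrow> ('g \<Rightarrow> 'a \<Rightarrow> 'a) \<Rightarrow> bool" where
  "similar_to_contractive J T \<longleftrightarrow> (\<exists>R Rinv. bop J R \<and> bop J Rinv \<and>
     R \<circ> Rinv = id \<and> Rinv \<circ> R = id \<and> (\<forall>g. onorm (Rinv \<circ> T g \<circ> R) \<le> 1))"

end

theory Submission imports Defs begin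

lemma orth_lemma:
  fixes z k :: "'a::real_inner"
  assumes "\<And>t. norm z \<le> norm (z + t *\<^sub>R k)"
  shows "inner z k = 0"
proof -
  define c where "c = inner z k"
  define K where "K = inner k k"
  have K0: "K \<ge> 0" unfolding K_def by simp
  define t where "t = - c / (K + 1)"
  have "(norm z)^2 \<le> (norm (z + t *\<^sub>R k))^2"
    using assms[of t] by (simp add: power_mono)
  also have "\<dots> = inner z z + 2 * t * c + t^2 * K"
    unfolding power2_norm_eq_inner c_def K_def
    by (simp add: inner_add_left inner_add_right inner_commute power2_eq_square algebra_simps)
  finally have "0 \<le> 2 * t * c + t^2 * K" by (simp add: power2_norm_eq_inner)
  moreover have K1: "K + 1 > 0" using K0 by simp
  moreover have "t * c = - (c^2 / (K+1))" unfolding t_def by (simp add: power2_eq_square)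
  moreover have "t^2 * K \<le> c^2 / (K+1)"
  proof -
    have "t^2 * K = c^2 * K / (K+1)^2" unfolding t_def by (simp add: power_divide)
    also have "\<dots> \<le> c^2 * (K+1) / (K+1)^2"
      using K1 by (intro divide_right_mono mult_left_mono) auto
    also have "\<dots> = c^2 / (K+1)" using K1 by (simp add: power2_eq_square)
    finally show ?thesis .
  qed
  ultimately have "0 \<le> - (c^2 / (K+1))" by linarith
  hence "c^2 \<le> 0" using K1 by (simp add: divide_le_0_iff)
  thus ?thesis unfolding c_def by simp
qed

lemma idem_eq:
  fixes E F :: "'a::real_inner \<Rightarrow> 'a"
  assumes lE: "linear E" and lF: "linear F"
    and nE: "\<And>x. norm (E x) \<le> norm x" and nF: "\<And>x. norm (F x) \<le> norm x"
    and EF: "\<And>x. E (F x) = E x" and FE: "\<And>x. F (E x) = F x"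
  shows "E y = F y"
proof -
  have EE: "E (E x) = E x" for x by (metis EF FE)
  have FF: "F (F x) = F x" for x by (metis EF FE)
  define a where "a = E y"
  define b where "b = F y - E y"
  have Eb: "E b = 0" unfolding b_def using linear_diff[OF lE] EF EE by simp
  have Fb: "F b = 0" unfolding b_def using linear_diff[OF lF] FF FE by simp
  have 1: "inner a b = 0"
  proof (rule orth_lemma)
    fix t
    have "E (a + t *\<^sub>R b) = a" using Eb EE unfolding a_def
      by (simp add: linear_add[OF lE] linear_scale[OF lE])
    thus "norm a \<le> norm (a + t *\<^sub>R b)" using nE by metis
  qed
  have 2: "inner (a + b) b = 0"
  proof (rule orth_lemma)
    fix t
    have ab: "a + b = F y" unfolding a_def b_def by simp
    have "F (a + b + t *\<^sub>R b) = a + b" using Fb FF unfolding ab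
      by (simp add: linear_add[OF lF] linear_scale[OF lF])
    thus "norm (a + b) \<le> norm (a + b + t *\<^sub>R b)" using nF by metis
  qed
  have "inner b b = 0" using 1 2 by (simp add: inner_add_left)
  hence "b = 0" by simp
  thus ?thesis unfolding b_def by simp
qed


definition cproj :: "('a::real_inner \<Rightarrow> 'a) \<Rightarrow> 'a \<Rightarrow> 'a \<Rightarrow> 'a \<Rightarrow> 'a" where
  "cproj J u w x = inner x u *\<^sub>R w + inner x (J u) *\<^sub>R J w"

lemma cs_lin: "complex_structure J \<Longrightarrow> linear J"
  and cs_JJ: "complex_structure J \<Longrightarrow> J (J x) = - x"
  and cs_inner: "complex_structure J \<Longrightarrow> inner (J x) (J y) = inner x y"
  unfolding complex_structure_def by auto

lemma cs_innerJ: assumes "complex_structure J" shows "inner (J x) y = - inner x (J y)"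
proof -
  have "inner (J x) y = inner (J (J x)) (J y)" using cs_inner[OF assms] by simp
  thus ?thesis using cs_JJ[OF assms] by simp
qed

lemma cs_uJu: assumes "complex_structure J" shows "inner u (J u) = 0"
  using cs_innerJ[OF assms, of u u] by (simp add: inner_commute)

lemma cproj_bl: "bounded_linear (cproj J u w)"
  unfolding cproj_def
  by (intro bounded_linear_add bounded_linear_scaleR_left bounded_linear_inner_left
       bounded_linear_compose[of "\<lambda>r. r *\<^sub>R _"])

lemma cproj_J: assumes "complex_structure J" shows "cproj J u w (J x) = J (cproj J u w x)"
proof -
  have l: "linear J" by (rule cs_lin[OF assms])
  have "J (cproj J u w x) = inner x u *\<^sub>R J w + inner x (J u) *\<^sub>R J (J w)"
    unfolding cproj_def by (simp add: linear_add[OF l] linear_scale[OF l])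
  also have "\<dots> = inner x u *\<^sub>R J w - inner x (J u) *\<^sub>R w" using cs_JJ[OF assms] by simp
  also have "\<dots> = cproj J u w (J x)"
    unfolding cproj_def using cs_innerJ[OF assms, of x u] cs_inner[OF assms, of x u] by simp
  finally show ?thesis by simp
qed

lemma cproj_bop: "complex_structure J \<Longrightarrow> bop J (cproj J u w)"
  unfolding bop_def using cproj_bl cproj_J by blast

lemma cproj_comp:
  assumes "complex_structure J" "inner w2 u = 1" "inner w2 (J u) = 0"
  shows "cproj J u w1 (cproj J u w2 x) = cproj J u w1 x"
proof -
  have l: "linear (cproj J u w1)" using cproj_bl bounded_linear.linear by blast
  have a: "cproj J u w1 w2 = w1" using assms(2,3) unfolding cproj_def by simp
  have b: "cproj J u w1 (J w2) = J w1"
    unfolding cproj_def using assms cs_innerJ[OF assms(1), of w2 u] cs_inner[OF assms(1), of w2 u] by simp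
  show ?thesis
    unfolding cproj_def[of J u w2]
    by (simp add: linear_add[OF l] linear_scale[OF l] a b) (simp add: cproj_def)
qed

lemma cproj_norm:
  assumes "complex_structure J" "norm u = 1"
  shows "norm (cproj J u u x) \<le> norm x"
proof -
  define a where "a = inner x u"
  define b where "b = inner x (J u)"
  have uu: "inner u u = 1" using assms(2) by (simp add: power2_norm_eq_inner[symmetric])
  have JJ: "inner (J u) (J u) = 1" using uu cs_inner[OF assms(1)] by simp
  have uJ: "inner u (J u) = 0" "inner (J u) u = 0" using cs_uJu[OF assms(1), of u] by (auto simp: inner_commute)
  have p: "cproj J u u x = a *\<^sub>R u + b *\<^sub>R J u" unfolding cproj_def a_def b_def by simp
  have n1: "inner (cproj J u u x) (cproj J u u x) = a^2 + b^2"
    unfolding p by (simp add: inner_add_left inner_add_right uu JJ uJ power2_eq_square)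
  have n2: "inner x (cproj J u u x) = a^2 + b^2"
    unfolding p by (simp add: inner_add_right a_def b_def power2_eq_square)
  have "inner x x = inner (cproj J u u x) (cproj J u u x) + inner (x - cproj J u u x) (x - cproj J u u x)"
    using n1 n2 by (simp add: inner_diff_left inner_diff_right inner_commute)
  hence "(norm (cproj J u u x))^2 \<le> (norm x)^2"
    by (simp add: power2_norm_eq_inner)
  thus ?thesis using power2_le_imp_le by fastforce
qed


theorem proposition4p6:
  fixes J :: "'a::{real_inner, complete_space} \<Rightarrow> 'a"
  assumes "complex_structure J" and "cdim_ge2 J"
  shows "\<exists>(m :: nat \<Rightarrow> nat \<Rightarrow> nat) e S T A B.
           unital_semigroup m e \<and> infinite (UNIV :: nat set) \<and> \<not> left_cancellative m \<and>
           representation J m e S \<and> contractive S \<and>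
           representation J m e T \<and> bop J A \<and> bop J B \<and>
           (\<lambda>g. (onorm (\<lambda>x. T g x - A (S g (B x))))\<^sup>2) summable_on UNIV \<and>
           \<not> similar_to_contractive J T"
proof -
  note cs = assms(1)
  obtain x0 where "x0 \<notin> span {0, J 0}" using assms(2) unfolding cdim_ge2_def by blast
  hence x0: "x0 \<noteq> 0" using span_zero by blast
  define u where "u = x0 /\<^sub>R norm x0"
  have nu: "norm u = 1" unfolding u_def using x0 by simp
  have uu: "inner u u = 1" using nu by (simp add: power2_norm_eq_inner[symmetric])
  have uJ: "inner u (J u) = 0" by (rule cs_uJu[OF cs])
  obtain x1 where x1: "x1 \<notin> span {u, J u}" using assms(2) unfolding cdim_ge2_def by blast
  define v where "v = x1 - cproj J u u x1"
  have "cproj J u u x1 \<in> span {u, J u}"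
    unfolding cproj_def by (intro span_add span_scale span_base) auto
  hence v0: "v \<noteq> 0" unfolding v_def using x1 by auto
  have JJ: "inner (J u) (J u) = 1" using uu cs_inner[OF cs] by simp
  have Ju: "inner (J u) u = 0" using uJ by (simp add: inner_commute)
  have vu: "inner v u = 0" unfolding v_def cproj_def
    by (simp add: inner_diff_left inner_add_left uu Ju)
  have vJ: "inner v (J u) = 0" unfolding v_def cproj_def
    by (simp add: inner_diff_left inner_add_left JJ uJ)
  define w where "w = u + v"
  have wu: "inner w u = 1" and wJ: "inner w (J u) = 0"
    unfolding w_def by (simp_all add: inner_add_left uu vu uJ vJ)
  define P where "P = cproj J u u"
  define Q where "Q = cproj J u w"
  have PP: "P (P x) = P x" for x unfolding P_def by (rule cproj_comp[OF cs uu uJ])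
  have PQ: "P (Q x) = P x" for x unfolding P_def Q_def by (rule cproj_comp[OF cs wu wJ])
  have QP: "Q (P x) = Q x" for x unfolding P_def Q_def by (rule cproj_comp[OF cs uu uJ])
  have QQ: "Q (Q x) = Q x" for x unfolding Q_def by (rule cproj_comp[OF cs wu wJ])
  have Pb: "bop J P" and Qb: "bop J Q" unfolding P_def Q_def by (simp_all add: cproj_bop cs)
  have idb: "bop J id" unfolding bop_def id_def by (simp add: bounded_linear_ident)
  have PneQ: "P u \<noteq> Q u"
  proof -
    have "P u = u" unfolding P_def cproj_def by (simp add: uu uJ)
    moreover have "Q u = w" unfolding Q_def cproj_def by (simp add: uu uJ)
    ultimately show ?thesis using v0 unfolding w_def by simp
  qed
  define m :: "nat \<Rightarrow> nat \<Rightarrow> nat" where "m = (\<lambda>a b. if a = 0 then b else a)"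
  define S :: "nat \<Rightarrow> 'a \<Rightarrow> 'a" where "S = (\<lambda>g. if g = 0 then id else P)"
  define T :: "nat \<Rightarrow> 'a \<Rightarrow> 'a" where "T = (\<lambda>g. if g = 0 then id else if g = 1 then Q else P)"
  have 1: "unital_semigroup m 0" unfolding unital_semigroup_def m_def by auto
  have 2: "\<not> left_cancellative m" unfolding left_cancellative_def m_def
    by (metis one_neq_zero numeral_One numeral_eq_iff semiring_norm(85) zero_neq_numeral)
  have 3: "representation J m 0 S" unfolding representation_def
    using Pb idb by (auto simp: S_def m_def fun_eq_iff PP)
  have 4: "contractive S" unfolding contractive_def
  proof
    fix g
    show "onorm (S g) \<le> 1"
      by (rule onorm_bound) (auto simp: S_def P_def cproj_norm[OF cs nu])
  qed
  have 5: "representation J m 0 T" unfolding representation_def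
    using Pb Qb idb by (auto simp: T_def m_def fun_eq_iff PP PQ QP QQ)
  have 6: "(\<lambda>g. (onorm (\<lambda>x. T g x - id (S g (id x))))\<^sup>2) summable_on UNIV"
  proof -
    have "(\<lambda>g. (onorm (\<lambda>x. T g x - id (S g (id x))))\<^sup>2) summable_on UNIV \<longleftrightarrow>
          (\<lambda>g. (onorm (\<lambda>x. T g x - id (S g (id x))))\<^sup>2) summable_on {1}"
      by (rule summable_on_cong_neutral) (auto simp: T_def S_def onorm_zero)
    thus ?thesis by simp
  qed
  have 7: "\<not> similar_to_contractive J T"
  proof
    assume "similar_to_contractive J T"
    then obtain R Rinv where R: "bop J R" and Ri: "bop J Rinv" and RRi: "R \<circ> Rinv = id"
      and RiR: "Rinv \<circ> R = id" and nb: "\<And>g. onorm (Rinv \<circ> T g \<circ> R) \<le> 1"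
      unfolding similar_to_contractive_def by blast
    have RRi': "R (Rinv x) = x" for x using RRi by (simp add: fun_eq_iff)
    define E where "E = Rinv \<circ> P \<circ> R"
    define F where "F = Rinv \<circ> Q \<circ> R"
    have blR: "bounded_linear R" "bounded_linear Rinv" "bounded_linear P" "bounded_linear Q"
      using R Ri Pb Qb unfolding bop_def by auto
    have blE: "bounded_linear E" unfolding E_def comp_def
      by (intro bounded_linear_compose[OF blR(2)] bounded_linear_compose[OF blR(3)] blR(1))
    have blF: "bounded_linear F" unfolding F_def comp_def
      by (intro bounded_linear_compose[OF blR(2)] bounded_linear_compose[OF blR(4)] blR(1))
    have nE: "norm (E x) \<le> norm x" for x
    proof -
      have "onorm E \<le> 1" using nb[of 2] unfolding E_def T_def by simp
      thus ?thesis using onorm[OF blE, of x] by (meson mult_left_le_one_le norm_ge_zero order_trans onorm_pos_le[OF blE] onorm_pos_le[OF blF])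
    qed
    have nF: "norm (F x) \<le> norm x" for x
    proof -
      have "onorm F \<le> 1" using nb[of 1] unfolding F_def T_def by simp
      thus ?thesis using onorm[OF blF, of x] by (meson mult_left_le_one_le norm_ge_zero order_trans onorm_pos_le[OF blE] onorm_pos_le[OF blF])
    qed
    have "E y = F y" for y
      by (rule idem_eq[OF bounded_linear.linear[OF blE] bounded_linear.linear[OF blF] nE nF])
         (simp_all add: E_def F_def RRi' PQ QP)
    hence "R (E (Rinv u)) = R (F (Rinv u))" by simp
    hence "P u = Q u" unfolding E_def F_def by (simp add: RRi')
    thus False using PneQ by simp
  qed
  show ?thesis
    apply (rule exI[of _ m], rule exI[of _ 0], rule exI[of _ S], rule exI[of _ T],
           rule exI[of _ id], rule exI[of _ id])
    using 1 2 3 4 5 6 7 idb by simp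
qed

end
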